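(* Let $k\ge1$ be an integer and $\alpha>\beta>0$. Then $$ \Big[-qs-\tfrac23\sqrt{(1-q^2)(1-s^2)},\,-qs\Big]\subset\mathcal J=(\gamma_{-1},\gamma_1). $$
   Context: Put $\eta=\alpha-\beta$, $\sigma=\alpha+\beta$, $r=2k+\alpha+\beta+1$, $\rho=r-1$, $q=\eta/r$, $s=\sigma/r$, and $\gamma_j=\frac{j\sqrt{(\rho^2-\eta^2)(\rho^2-\sigma^2)}-\eta\sigma}{\rho^2}$ for $j=\pm1$. *)

theory Defs
  imports Complex_Main
begin

definition eta :: "real \<Rightarrow> real \<Rightarrow> real" where "eta a b = a - b"
definition sigma :: "real \<Rightarrow> real \<Rightarrow> real" where "sigma a b = a + b"
definition rr :: "nat \<Rightarrow> real \<Rightarrow> real \<Rightarrow> real" where "rr k a b = 2 * real k + a + b + 1"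
definition rho :: "nat \<Rightarrow> real \<Rightarrow> real \<Rightarrow> real" where "rho k a b = rr k a b - 1"
definition qq :: "nat \<Rightarrow> real \<Rightarrow> real \<Rightarrow> real" where "qq k a b = eta a b / rr k a b"
definition ss :: "nat \<Rightarrow> real \<Rightarrow> real \<Rightarrow> real" where "ss k a b = sigma a b / rr k a b"

definition gam :: "int \<Rightarrow> nat \<Rightarrow> real \<Rightarrow> real \<Rightarrow> real" where
  "gam j k a b =
     (real_of_int j * sqrt ((rho k a b ^ 2 - eta a b ^ 2) * (rho k a b ^ 2 - sigma a b ^ 2))
        - eta a b * sigma a b) / rho k a b ^ 2"

end

theory Submission
  imports Defs
begin

lemma key3:
  fixes x t s :: real
  assumes "0 \<le> t" "t \<le> s" "s + 2 \<le> x"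
  shows "2 * (((x+1)^2 - t^2) * x^2) < 3 * ((x^2 - t^2) * (x+1)^2)"
proof -
  have s0: "0 \<le> s" using assms by linarith
  have "t^2 \<le> s^2" using assms by (simp add: power_mono)
  also have "s^2 \<le> (x-2)^2" using assms s0 by (simp add: power_mono)
  finally have t2: "t^2 \<le> (x-2)^2" .
  have h: "t^2 * (x^2+6*x+3) \<le> (x-2)^2 * (x^2+6*x+3)"
    using t2 assms s0 by (intro mult_right_mono) auto
  have "(x-2)^2 * (x^2+6*x+3) < x^2*(x+1)^2"
  proof -
    have d: "x^2*(x+1)^2 - (x-2)^2 * (x^2+6*x+3) = 18*x^2-12*x-12"
      by (simp add: power2_eq_square algebra_simps)
    have "2*x \<le> x*x" using assms s0 by (intro mult_right_mono) auto
    then have "0 < 18*x^2-12*x-12" using assms s0 unfolding power2_eq_square by linarith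
    then show ?thesis using d by linarith
  qed
  then show ?thesis using h by (simp add: power2_eq_square algebra_simps)
qed

theorem lemma9:
  fixes k :: nat and \<alpha> \<beta> :: real
  assumes "k \<ge> 1" and "\<alpha> > \<beta>" and "\<beta> > 0"
  shows "{- qq k \<alpha> \<beta> * ss k \<alpha> \<beta>
            - 2/3 * sqrt ((1 - qq k \<alpha> \<beta> ^ 2) * (1 - ss k \<alpha> \<beta> ^ 2))
          .. - qq k \<alpha> \<beta> * ss k \<alpha> \<beta>}
         \<subseteq> {gam (-1) k \<alpha> \<beta> <..< gam 1 k \<alpha> \<beta>}"
proof -
  define e where "e = \<alpha> - \<beta>"
  define s where "s = \<alpha> + \<beta>"
  define x where "x = 2 * real k + s"
  have e0: "0 < e" and es: "e < s" and s0: "0 < s" using assms by (auto simp: e_def s_def)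
  have xs: "s + 2 \<le> x" using assms by (simp add: x_def)
  have x0: "0 < x" using xs s0 by linarith
  have rr: "rr k \<alpha> \<beta> = x + 1" by (simp add: rr_def x_def s_def)
  have rho: "rho k \<alpha> \<beta> = x" by (simp add: rho_def rr x_def)
  have q: "qq k \<alpha> \<beta> = e / (x+1)" by (simp add: qq_def rr eta_def e_def)
  have ss: "ss k \<alpha> \<beta> = s / (x+1)" by (simp add: ss_def rr sigma_def s_def)
  define Aq where "Aq = (x^2 - e^2) * (x^2 - s^2)"
  have g1: "gam 1 k \<alpha> \<beta> = (sqrt Aq - e*s) / x^2"
    by (simp add: gam_def rho Aq_def eta_def sigma_def e_def s_def)
  have gm: "gam (-1) k \<alpha> \<beta> = (- sqrt Aq - e*s) / x^2"
    by (simp add: gam_def rho Aq_def eta_def sigma_def e_def s_def)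
  define P where "P = (1 - (e/(x+1))^2) * (1 - (s/(x+1))^2)"
  have sx: "s < x" using xs by linarith
  have ex: "e < x" using es sx by linarith
  have s2: "s^2 < x^2" using sx s0 by (simp add: power_strict_mono)
  have e2: "e^2 < s^2" using es e0 by (simp add: power_strict_mono)
  have A1: "x^2 - s^2 \<le> x^2 - e^2" using e2 by linarith
  have A2: "0 < x^2 - s^2" using s2 by linarith
  have Aq0: "0 < Aq" unfolding Aq_def using A1 A2 by (intro mult_pos_pos) linarith+
  have sqA: "x^2 - s^2 \<le> sqrt Aq"
  proof -
    have "(x^2 - s^2) * (x^2 - s^2) \<le> Aq" unfolding Aq_def
      using A1 A2 by (intro mult_right_mono) auto
    then have "(x^2 - s^2)^2 \<le> Aq" by (simp only: power2_eq_square[of "x^2 - s^2"])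
    then show ?thesis by (metis real_le_rsqrt)
  qed
  have ms: "2 * (2*s+2) \<le> x^2 - s^2"
  proof -
    have "x^2 - s^2 = (x - s) * (x + s)" by (simp add: power2_eq_square algebra_simps)
    moreover have "2 * (2*s+2) \<le> (x - s) * (x + s)"
      using xs s0 by (intro mult_mono) auto
    ultimately show ?thesis by simp
  qed
  have es2: "e * s < s^2" using es s0 by (simp add: power2_eq_square)
  have up0: "e*s*(2*x+1) < (x^2 - s^2) * (x+1)^2"
  proof -
    have "e*s*(2*x+1) < s^2 * (2*x+1)" using es2 x0 by simp
    also have "\<dots> \<le> 4 * s^2 * (x+1)" using x0 s0 by simp
    also have "\<dots> \<le> 4 * s * (x+1)^2"
      using sx s0 x0 by (simp add: power2_eq_square)
    also have "\<dots> \<le> 4 * (s+1) * (x+1)^2" using x0 by simp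
    also have "\<dots> \<le> (x^2 - s^2) * (x+1)^2" using ms by (intro mult_right_mono) auto
    finally show ?thesis .
  qed
  have up: "e*s*(2*x+1) < sqrt Aq * (x+1)^2"
    using up0 sqA by (smt (verit) mult_right_mono zero_le_power2)
  have "x+1 \<noteq> 0" using x0 by linarith
  have upper: "- (e/(x+1)) * (s/(x+1)) < (sqrt Aq - e*s) / x^2"
  proof -
    have "(x+1)^2 = x^2 + (2*x+1)" by (simp add: power2_eq_square algebra_simps)
    then have "- (e*s) * x^2 < (sqrt Aq - e*s) * (x+1)^2" using up
      by (simp add: algebra_simps)
    moreover have "- (e/(x+1)) * (s/(x+1)) * ((x+1)^2*x^2) = - (e*s) * x^2"
    proof -
      have "\<And>y. y \<noteq> 0 \<Longrightarrow> - (e/y) * (s/y) * (y^2*x^2) = - (e*s) * x^2"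
        by (simp add: field_simps power2_eq_square)
      then show ?thesis using \<open>x+1 \<noteq> 0\<close> by blast
    qed
    moreover have "(sqrt Aq - e*s) / x^2 * ((x+1)^2*x^2) = (sqrt Aq - e*s) * (x+1)^2"
      using x0 by (simp add: field_simps power2_eq_square)
    moreover have "0 < (x+1)^2*x^2" using x0 by simp
    ultimately show ?thesis by (metis mult_less_cancel_right_pos)
  qed
  have X1: "2 * (((x+1)^2 - e^2) * x^2) < 3 * ((x^2 - e^2) * (x+1)^2)"
    using key3[of e s x] e0 es xs by simp
  have X2: "2 * (((x+1)^2 - s^2) * x^2) < 3 * ((x^2 - s^2) * (x+1)^2)"
    using key3[of s s x] s0 xs by simp
  have Y1: "0 < ((x+1)^2 - e^2) * x^2"
  proof -
    have "e^2 < (x+1)^2" using ex e0 by (intro power_strict_mono) auto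
    then show ?thesis using x0 by simp
  qed
  have Y2: "0 < ((x+1)^2 - s^2) * x^2"
  proof -
    have "s^2 < (x+1)^2" using sx s0 by (intro power_strict_mono) auto
    then show ?thesis using x0 by simp
  qed
  have prod: "(2 * (((x+1)^2 - e^2) * x^2)) * (2 * (((x+1)^2 - s^2) * x^2))
     < (3 * ((x^2 - e^2) * (x+1)^2)) * (3 * ((x^2 - s^2) * (x+1)^2))"
    by (rule mult_strict_mono[OF X1 X2]) (use X1 Y1 Y2 in linarith)+
  have P_eq: "P = ((x+1)^2 - e^2) * ((x+1)^2 - s^2) / (x+1)^4"
  proof -
    have "\<And>y. y \<noteq> 0 \<Longrightarrow> (1 - (e/y)^2) * (1 - (s/y)^2) = (y^2 - e^2) * (y^2 - s^2) / y^4"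
      by (simp add: field_simps power2_eq_square power4_eq_xxxx)
    then show ?thesis unfolding P_def using \<open>x+1 \<noteq> 0\<close> by blast
  qed
  have P0: "0 \<le> P" unfolding P_eq using Y1 Y2 x0
    by (smt (verit) divide_nonneg_pos mult_pos_pos zero_less_mult_pos2 zero_less_power)
  have ineq: "4/9 * P < Aq / x^4"
  proof -
    have c: "4 * (((x+1)^2 - e^2) * ((x+1)^2 - s^2)) * x^4 < 9 * Aq * (x+1)^4"
      using prod unfolding Aq_def by (simp add: power2_eq_square power4_eq_xxxx algebra_simps)
    have H: "\<And>y N. 0 < y \<Longrightarrow> 4 * N * x^4 < 9 * Aq * y^4 \<Longrightarrow> 4/9 * (N / y^4) < Aq / x^4"
      using x0 by (simp add: field_simps)
    show ?thesis unfolding P_eq by (rule H[OF _ c]) (use x0 in linarith)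
  qed
  have sq: "2/3 * sqrt P < sqrt Aq / x^2"
  proof -
    have "sqrt (4/9 * P) < sqrt (Aq / x^4)" using ineq by simp
    moreover have "sqrt (4/9 * P) = 2/3 * sqrt P"
      by (simp add: real_sqrt_mult real_sqrt_divide)
    moreover have "sqrt (Aq / x^4) = sqrt Aq / x^2"
    proof -
      have "sqrt (x^4) = x^2"
      proof -
        have "x^4 = (x^2)^2" by simp
        then show ?thesis by (metis real_sqrt_abs abs_power2)
      qed
      then show ?thesis by (simp add: real_sqrt_divide)
    qed
    ultimately show ?thesis by linarith
  qed
  have es_le: "e*s/(x+1)^2 \<le> e*s/x^2"
    using e0 s0 x0 by (intro divide_left_mono mult_pos_pos power_mono) auto
  have lower: "(- sqrt Aq - e*s) / x^2 < - (e/(x+1)) * (s/(x+1)) - 2/3 * sqrt P"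
  proof -
    have "(- sqrt Aq - e*s) / x^2 = - (sqrt Aq / x^2) - e*s/x^2" by (simp add: diff_divide_distrib)
    moreover have "- (e/(x+1)) * (s/(x+1)) = - (e*s/(x+1)^2)" by (simp add: power2_eq_square)
    ultimately show ?thesis using sq es_le by linarith
  qed
  show ?thesis
    unfolding q ss g1 gm P_def[symmetric]
    using upper lower by auto
qed

end
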